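(* Let $G=(V,E)$ be a finite simple undirected graph, let $0<p\le 1$, and let $T\subseteq V$ be a set maximizing $f_p(S)$ over all $S\subseteq V$. Then for every $v\in T$ we have $d_v(T)^p\ge f_p(T)/2$.
   Context: For $v\in V$, $N(v)=\{u\in V:(u,v)\in E\}$ (so $v\notin N(v)$). For $S\subseteq V$ and $v\in V$, $d_v(S)=|N(v)\cap S|$. For $p>0$ and nonempty $S\subseteq V$, $f_p(S)=\frac{1}{|S|}\sum_{v\in S}d_v(S)^p$ (with the convention $0^p=0$), and $f_p(\emptyset)=0$. *)

theory Defs
  imports Complex_Main
begin

definition simple_graph :: "'a set \<Rightarrow> ('a \<Rightarrow> 'a \<Rightarrow> bool) \<Rightarrow> bool" where
  "simple_graph V E \<longleftrightarrow> finite V \<and> (\<forall>u v. E u v \<longrightarrow> E v u)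
     \<and> (\<forall>v. \<not> E v v) \<and> (\<forall>u v. E u v \<longrightarrow> u \<in> V \<and> v \<in> V)"

definition nbhd :: "'a set \<Rightarrow> ('a \<Rightarrow> 'a \<Rightarrow> bool) \<Rightarrow> 'a \<Rightarrow> 'a set" where
  "nbhd V E v = {u \<in> V. E u v}"

definition deg_in :: "'a set \<Rightarrow> ('a \<Rightarrow> 'a \<Rightarrow> bool) \<Rightarrow> 'a \<Rightarrow> 'a set \<Rightarrow> nat" where
  "deg_in V E v S = card (nbhd V E v \<inter> S)"

text \<open>f_p(S) = (1/|S|) * sum of d_v(S)^p; powr gives 0 powr p = 0, and f_p({}) = 0.\<close>
definition fp :: "'a set \<Rightarrow> ('a \<Rightarrow> 'a \<Rightarrow> bool) \<Rightarrow> real \<Rightarrow> 'a set \<Rightarrow> real" where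
  "fp V E p S = (if S = {} then 0
     else (\<Sum>v\<in>S. real (deg_in V E v S) powr p) / real (card S))"

end

theory Submission
  imports Defs
begin
lemma key1:
  fixes x r :: nat and p :: real
  assumes "0<p" "p\<le>1" "r \<le> x"
  shows "real x powr p - real (x - r) powr p \<le> real r * real x powr (p-1)"
proof (cases "x = 0")
  case True then show ?thesis using assms by simp
next
  case False
  define t where "t = real (x - r) / real x"
  have t0: "0 \<le> t" and t1: "t \<le> 1" using False assms by (auto simp: t_def)
  have xt: "real (x - r) = real x * t" using False by (simp add: t_def)
  have "t \<le> t powr p"
  proof (cases "t = 0")
    case True then show ?thesis by simp
  next
    case False
    then have "t powr 1 \<le> t powr p" using powr_mono'[of p 1 t] assms t0 t1 by simp
    then show ?thesis using False t0 by simp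
  qed
  then have "real x powr p * t \<le> real x powr p * t powr p" by (simp add: mult_left_mono)
  also have "\<dots> = real (x - r) powr p" using xt t0 by (simp add: powr_mult)
  finally have A: "real x powr p * t \<le> real (x - r) powr p" .
  have "real x powr p * t = real x powr p - real r * (real x powr p / real x)"
    using False assms(3) by (simp add: t_def of_nat_diff field_simps)
  moreover have "real x powr p / real x = real x powr (p-1)"
    using False by (simp add: powr_diff)
  ultimately show ?thesis using A by simp
qed

theorem lemma4:
  fixes V :: "'a set" and E :: "'a \<Rightarrow> 'a \<Rightarrow> bool" and p :: real and T :: "'a set"
  assumes "simple_graph V E"
    and "0 < p" and "p \<le> 1"
    and "T \<subseteq> V"
    and "\<forall>S. S \<subseteq> V \<longrightarrow> fp V E p S \<le> fp V E p T"
  shows "\<forall>v\<in>T. real (deg_in V E v T) powr p \<ge> fp V E p T / 2"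
proof (rule ccontr)
  assume "\<not> ?thesis"
  then obtain v where vT: "v \<in> T" and vlow: "real (deg_in V E v T) powr p < fp V E p T / 2"
    by auto
  have finV: "finite V" and sym: "\<And>u w. E u w \<Longrightarrow> E w u"
    and inV: "\<And>u w. E u w \<Longrightarrow> u \<in> V \<and> w \<in> V"
    using assms(1) unfolding simple_graph_def by auto
  have finT: "finite T" using finV assms(4) finite_subset by blast
  define g where "g u = real (deg_in V E u T) powr p" for u
  define F where "F = fp V E p T"
  define n where "n = card T"
  have Tne: "T \<noteq> {}" using vT by auto
  have npos: "n > 0" using finT Tne n_def by (simp add: card_gt_0_iff)
  have sumT: "(\<Sum>u\<in>T. g u) = real n * F"
    using Tne npos unfolding F_def fp_def g_def n_def by simp
  have F0: "F \<ge> 0"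
    unfolding F_def fp_def using sum_nonneg[of T "\<lambda>v. real (deg_in V E v T) powr p"] by simp
  define R where "R = {u\<in>T. g u < F/2}"
  define T' where "T' = T - R"
  have RT: "R \<subseteq> T" unfolding R_def by auto
  have finR: "finite R" using finT RT finite_subset by blast
  have finT': "finite T'" using finT T'_def by simp
  have vR: "v \<in> R" using vT vlow unfolding R_def g_def F_def by simp
  have Rne: "R \<noteq> {}" using vR by auto
  have sumR: "(\<Sum>u\<in>R. g u) < real (card R) * (F/2)"
    using sum_strict_mono[of R g "\<lambda>_. F/2"] finR Rne unfolding R_def by auto
  have splitT: "(\<Sum>u\<in>T. g u) = (\<Sum>u\<in>R. g u) + (\<Sum>u\<in>T'. g u)"
    unfolding T'_def using sum.subset_diff[OF RT finT, of g] by simp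
  have cardT': "real (card T') = real n - real (card R)"
    unfolding T'_def n_def using card_Diff_subset[OF finR RT] card_mono[OF finT RT]
    by (simp add: of_nat_diff)
  show False
  proof (cases "T' = {}")
    case True
    then have "R = T" using RT T'_def by auto
    then have "real n * F < real n * (F/2)" using sumR sumT n_def by simp
    then show False using F0 npos by (simp add: mult_less_cancel_left)
  next
    case False
    define h where "h u = real (deg_in V E u T) powr (p-1)" for u
    define c where "c w = card (nbhd V E w \<inter> R)" for w
    have step1: "g w - real (deg_in V E w T') powr p \<le> (\<Sum>u\<in>nbhd V E w \<inter> R. h u)"
      if wT': "w \<in> T'" for w
    proof -
      have dsplit: "nbhd V E w \<inter> T = (nbhd V E w \<inter> T') \<union> (nbhd V E w \<inter> R)"
        using RT T'_def by auto
      have fin1: "finite (nbhd V E w \<inter> T')" using finT' by simp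
      have fin2: "finite (nbhd V E w \<inter> R)" using finR by simp
      have "deg_in V E w T = deg_in V E w T' + c w"
        unfolding deg_in_def c_def dsplit
        by (rule card_Un_disjoint[OF fin1 fin2]) (use T'_def in auto)
      then have eq: "deg_in V E w T' = deg_in V E w T - c w" "c w \<le> deg_in V E w T" by auto
      have "g w - real (deg_in V E w T') powr p \<le> real (c w) * real (deg_in V E w T) powr (p-1)"
        unfolding g_def eq(1) by (rule key1[OF assms(2,3) eq(2)])
      also have "\<dots> = (\<Sum>u\<in>nbhd V E w \<inter> R. real (deg_in V E w T) powr (p-1))"
        unfolding c_def by simp
      also have "\<dots> \<le> (\<Sum>u\<in>nbhd V E w \<inter> R. h u)"
      proof (rule sum_mono)
        fix u assume u: "u \<in> nbhd V E w \<inter> R"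
        then have Euw: "E u w" and uR: "u \<in> R" unfolding nbhd_def by auto
        have wT: "w \<in> T" using wT' T'_def by auto
        have "w \<in> nbhd V E u \<inter> T" using sym[OF Euw] inV[OF Euw] wT unfolding nbhd_def by auto
        then have d1: "deg_in V E u T \<ge> 1" unfolding deg_in_def
          using finT by (metis Int_iff card_0_eq empty_iff finite_Int less_one not_less)
        have gu: "g u < F/2" using uR R_def by auto
        have gw: "g w \<ge> F/2" using wT' wT R_def T'_def by auto
        have "deg_in V E u T \<le> deg_in V E w T"
        proof (rule ccontr)
          assume "\<not> ?thesis"
          then have "real (deg_in V E w T) \<le> real (deg_in V E u T)" by simp
          then have "g w \<le> g u" unfolding g_def using assms(2) by (simp add: powr_mono2)
          then show False using gu gw by simp
        qed
        then show "real (deg_in V E w T) powr (p-1) \<le> h u"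
          unfolding h_def using d1 assms(3) by (intro powr_mono2') auto
      qed
      finally show ?thesis .
    qed
    have nbR: "nbhd V E w \<inter> R = {u\<in>R. E u w}" for w
      using RT assms(4) unfolding nbhd_def by auto
    have swap: "(\<Sum>w\<in>T'. \<Sum>u\<in>nbhd V E w \<inter> R. h u) = (\<Sum>u\<in>R. \<Sum>w | w \<in> T' \<and> E u w. h u)"
      unfolding nbR using sum.swap_restrict[OF finT' finR, of "\<lambda>w u. h u" "\<lambda>w u. E u w"] by simp
    have step2: "(\<Sum>w | w \<in> T' \<and> E u w. h u) \<le> g u" if uR: "u \<in> R" for u
    proof -
      have sub: "{w. w \<in> T' \<and> E u w} \<subseteq> nbhd V E u \<inter> T"
        using sym inV T'_def unfolding nbhd_def by auto
      have cle: "card {w. w \<in> T' \<and> E u w} \<le> deg_in V E u T"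
        unfolding deg_in_def using card_mono[OF _ sub] finT by simp
      show ?thesis
      proof (cases "card {w. w \<in> T' \<and> E u w} = 0")
        case True then show ?thesis unfolding g_def by simp
      next
        case False
        then have dpos: "deg_in V E u T > 0" using cle by simp
        have "(\<Sum>w | w \<in> T' \<and> E u w. h u) = real (card {w. w \<in> T' \<and> E u w}) * h u" by simp
        also have "\<dots> \<le> real (deg_in V E u T) * h u"
          using cle by (intro mult_right_mono) (auto simp: h_def)
        also have "\<dots> = g u" unfolding h_def g_def using dpos
          by (simp add: powr_diff)
        finally show ?thesis .
      qed
    qed
    have "(\<Sum>w\<in>T'. g w) - (\<Sum>w\<in>T'. real (deg_in V E w T') powr p)
          \<le> (\<Sum>w\<in>T'. \<Sum>u\<in>nbhd V E w \<inter> R. h u)"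
      using sum_mono[of T' "\<lambda>w. g w - real (deg_in V E w T') powr p", OF step1]
      by (simp add: sum_subtractf)
    also have "\<dots> \<le> (\<Sum>u\<in>R. g u)" unfolding swap by (rule sum_mono) (rule step2)
    finally have A: "(\<Sum>w\<in>T'. real (deg_in V E w T') powr p) \<ge> (\<Sum>w\<in>T'. g w) - (\<Sum>u\<in>R. g u)" by simp
    have "(\<Sum>w\<in>T'. real (deg_in V E w T') powr p) > real (card T') * F"
    proof -
      have "real (card T') * F = real n * F - real (card R) * F" unfolding cardT' by (rule left_diff_distrib)
      then show ?thesis using A splitT sumT sumR by linarith
    qed
    moreover have cpos: "card T' > 0" using False finT' by (simp add: card_gt_0_iff)
    ultimately have "F < (\<Sum>w\<in>T'. real (deg_in V E w T') powr p) / real (card T')"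
      using cpos by (metis mult.commute pos_less_divide_eq of_nat_0_less_iff)
    moreover have "fp V E p T' = (\<Sum>w\<in>T'. real (deg_in V E w T') powr p) / real (card T')"
      unfolding fp_def using False by simp
    ultimately have "fp V E p T' > F" by simp
    moreover have "T' \<subseteq> V" using T'_def assms(4) by auto
    then have "fp V E p T' \<le> F" using assms(5) F_def by blast
    ultimately show False by linarith
  qed
qed

end
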